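(* For $\sigma>0$ let $\mathcal H_\sigma$ denote the RKHS of the Gaussian kernel $k_\sigma(x,y) = \exp(-\|x-y\|^2/(2\sigma^2))$ on $\mathbb R^d$, with norm $\|\cdot\|_\sigma$. Let $x_1,\dots,x_m \in \mathbb R^d$, and let $f = \sum_i a_i k_\sigma(x_i,\cdot)$ and $g = \sum_j b_j k_\sigma(x_j,\cdot)$ with real coefficients $a_i, b_j$. Let $z_i = \phi_{\sqrt2\sigma}(x_i)$ denote the (possibly infinite-dimensional) feature vector of $x_i$ in $\mathcal H_{\sqrt2\sigma}$, so that $z_i^T z_j = k_{\sqrt2\sigma}(x_i,x_j)$. Define the operators $A = \sum_i a_i z_i z_i^T$ and $B = \sum_j b_j z_j z_j^T$. Then $$\|fg\|_{\sigma/\sqrt2}^2 = \operatorname{tr}(A^2B^2),\qquad \|f\|_\sigma^2 = \operatorname{tr}(A^2),\qquad \|g\|_\sigma^2 = \operatorname{tr}(B^2).$$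
   Context: $z_i z_i^T$ denotes the rank-one operator $v \mapsto \langle z_i, v\rangle z_i$ on the feature space, and $\operatorname{tr}$ is the trace of the resulting finite-rank operator. *)

theory Defs
  imports "HOL-Analysis.Analysis"
begin

definition gauss_kernel :: "real \<Rightarrow> 'a::real_normed_vector \<Rightarrow> 'a \<Rightarrow> real" where
  "gauss_kernel \<sigma> x y = exp (- (norm (x - y))\<^sup>2 / (2 * \<sigma>\<^sup>2))"

text \<open>Squared RKHS norm of f for the kernel k (Aronszajn characterisation):
  the least C such that C k(x,y) - f(x) f(y) is a positive semidefinite kernel,
  i.e. (sum c_i f(y_i))^2 <= C sum_ij c_i c_j k(y_i,y_j) for all finite
  families. f lies in the RKHS iff such a C exists.\<close>
definition rkhs_bound :: "('a \<Rightarrow> 'a \<Rightarrow> real) \<Rightarrow> ('a \<Rightarrow> real) \<Rightarrow> real \<Rightarrow> bool" where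
  "rkhs_bound k f C \<longleftrightarrow>
     (\<forall>(n::nat) (c::nat \<Rightarrow> real) (y::nat \<Rightarrow> 'a).
        (\<Sum>i<n. c i * f (y i))\<^sup>2 \<le> C * (\<Sum>i<n. \<Sum>j<n. c i * c j * k (y i) (y j)))"

definition in_rkhs :: "('a \<Rightarrow> 'a \<Rightarrow> real) \<Rightarrow> ('a \<Rightarrow> real) \<Rightarrow> bool" where
  "in_rkhs k f \<longleftrightarrow> (\<exists>C. rkhs_bound k f C)"

definition rkhs_norm_sq :: "('a \<Rightarrow> 'a \<Rightarrow> real) \<Rightarrow> ('a \<Rightarrow> real) \<Rightarrow> real" where
  "rkhs_norm_sq k f = Inf {C. rkhs_bound k f C}"

definition rank_one :: "'h::real_inner \<Rightarrow> 'h \<Rightarrow> 'h" where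
  "rank_one z v = (z \<bullet> v) *\<^sub>R z"

text \<open>Trace of a finite-rank operator: sum of <e, T e> over any finite orthonormal
  set E whose span contains the range of T (independent of the choice of E).\<close>
definition fr_trace :: "('h::real_inner \<Rightarrow> 'h) \<Rightarrow> real" where
  "fr_trace T = (THE t. \<forall>E. finite E \<and> pairwise orthogonal E \<and> (\<forall>e\<in>E. norm e = 1)
       \<and> range T \<subseteq> span E \<longrightarrow> t = (\<Sum>e\<in>E. e \<bullet> T e))"

end

theory Submission
  imports Defs
begin

lemma onb_extend:
  fixes S :: "'h::real_inner set"
  assumes "finite S" "finite E0" "pairwise orthogonal E0" "\<forall>e\<in>E0. norm e = 1"
  shows "\<exists>E. E0 \<subseteq> E \<and> finite E \<and> pairwise orthogonal E \<and> (\<forall>e\<in>E. norm e = 1) \<and> S \<subseteq> span E"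
  using assms(1)
proof (induction S)
  case empty
  then show ?case using assms by blast
next
  case (insert a S)
  then obtain E where E: "E0 \<subseteq> E" "finite E" "pairwise orthogonal E" "\<forall>e\<in>E. norm e = 1" "S \<subseteq> span E"
    by blast
  define a' where "a' = a - (\<Sum>e\<in>E. (e \<bullet> a) *\<^sub>R e)"
  have orth: "e \<bullet> a' = 0" if "e \<in> E" for e
  proof -
    have "(\<Sum>e'\<in>E. (e' \<bullet> a) * (e \<bullet> e')) = (\<Sum>e'\<in>E. if e' = e then e \<bullet> a else 0)"
    proof (rule sum.cong[OF refl])
      fix e' assume "e' \<in> E"
      show "(e' \<bullet> a) * (e \<bullet> e') = (if e' = e then e \<bullet> a else 0)"
      proof (cases "e' = e")
        case True
        then have "e \<bullet> e = 1" using E(4) that by (simp add: dot_square_norm)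
        then show ?thesis using True by simp
      next
        case False
        then show ?thesis using E(3) \<open>e' \<in> E\<close> that by (auto simp: pairwise_def orthogonal_def inner_commute)
      qed
    qed
    also have "\<dots> = e \<bullet> a" using E(2) that by simp
    finally show ?thesis unfolding a'_def by (simp add: inner_diff_right inner_sum_right)
  qed
  have sa: "(\<Sum>e\<in>E. (e \<bullet> a) *\<^sub>R e) \<in> span E"
    by (simp add: span_sum span_mul span_base)
  show ?case
  proof (cases "a' = 0")
    case True
    then have "a \<in> span E" using sa unfolding a'_def by simp
    then show ?thesis using E by blast
  next
    case False
    define u where "u = a' /\<^sub>R norm a'"
    have nu: "norm u = 1" using False u_def by simp
    have ou: "orthogonal u e" if "e \<in> E" for e
      using orth[OF that] by (simp add: u_def orthogonal_def inner_commute)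
    have po: "pairwise orthogonal (insert u E)"
      by (rule pairwise_orthogonal_insert[OF E(3)]) (use ou in blast)
    have "a = norm a' *\<^sub>R u + (\<Sum>e\<in>E. (e \<bullet> a) *\<^sub>R e)"
      using False by (simp add: u_def a'_def)
    moreover have "norm a' *\<^sub>R u \<in> span (insert u E)" by (simp add: span_mul span_base)
    moreover have "(\<Sum>e\<in>E. (e \<bullet> a) *\<^sub>R e) \<in> span (insert u E)"
      using sa by (meson span_mono subset_insertI subsetD)
    ultimately have "a \<in> span (insert u E)" by (metis span_add)
    moreover have "S \<subseteq> span (insert u E)" using E(5) by (meson span_mono subset_insertI order_trans)
    ultimately show ?thesis using E po nu by (intro exI[of _ "insert u E"]) auto
  qed
qed

lemma onb_expand:
  fixes E :: "'h::real_inner set"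
  assumes "finite E" "pairwise orthogonal E" "\<forall>e\<in>E. norm e = 1" "u \<in> span E"
  shows "(\<Sum>e\<in>E. (e \<bullet> u) *\<^sub>R e) = u"
proof -
  from assms(4) obtain c where u: "u = (\<Sum>e\<in>E. c e *\<^sub>R e)"
    using assms(1) by (auto simp: span_finite)
  have "e \<bullet> u = c e" if "e \<in> E" for e
  proof -
    have "e \<bullet> u = (\<Sum>e'\<in>E. c e' * (e \<bullet> e'))" by (simp add: u inner_sum_right)
    also have "\<dots> = (\<Sum>e'\<in>E. if e' = e then c e else 0)"
    proof (rule sum.cong[OF refl])
      fix e' assume "e' \<in> E"
      show "c e' * (e \<bullet> e') = (if e' = e then c e else 0)"
      proof (cases "e' = e")
        case True
        then have "e \<bullet> e = 1" using assms(3) that by (simp add: dot_square_norm)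
        then show ?thesis using True by simp
      next
        case False
        then show ?thesis using assms(2) \<open>e' \<in> E\<close> that by (auto simp: pairwise_def orthogonal_def inner_commute)
      qed
    qed
    also have "\<dots> = c e" using assms(1) that by simp
    finally show ?thesis .
  qed
  then show ?thesis by (simp add: u)
qed

lemma onb_parseval:
  fixes E :: "'h::real_inner set"
  assumes "finite E" "pairwise orthogonal E" "\<forall>e\<in>E. norm e = 1" "u \<in> span E"
  shows "(\<Sum>e\<in>E. (v \<bullet> e) * (e \<bullet> u)) = v \<bullet> u"
proof -
  have "v \<bullet> u = v \<bullet> (\<Sum>e\<in>E. (e \<bullet> u) *\<^sub>R e)" using onb_expand[OF assms] by simp
  also have "\<dots> = (\<Sum>e\<in>E. (v \<bullet> e) * (e \<bullet> u))" by (simp add: inner_sum_right mult.commute)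
  finally show ?thesis by simp
qed

definition frop :: "'k set \<Rightarrow> ('k \<Rightarrow> 'h::real_inner) \<Rightarrow> ('k \<Rightarrow> 'h) \<Rightarrow> 'h \<Rightarrow> 'h" where
  "frop K w y = (\<lambda>v. \<Sum>k\<in>K. (w k \<bullet> v) *\<^sub>R y k)"

lemma frop_trace_any:
  fixes w y :: "'k \<Rightarrow> 'h::real_inner"
  assumes K: "finite K" and E: "finite E" "pairwise orthogonal E" "\<forall>e\<in>E. norm e = 1"
    and R: "range (frop K w y) \<subseteq> span E"
  shows "(\<Sum>e\<in>E. e \<bullet> frop K w y e) = (\<Sum>k\<in>K. w k \<bullet> y k)"
proof -
  obtain F where F: "E \<subseteq> F" "finite F" "pairwise orthogonal F" "\<forall>e\<in>F. norm e = 1"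
      "w ` K \<union> y ` K \<subseteq> span F"
    using onb_extend[of "w ` K \<union> y ` K" E] K E by auto
  have "(\<Sum>f\<in>F. f \<bullet> frop K w y f) = (\<Sum>f\<in>F. \<Sum>k\<in>K. (w k \<bullet> f) * (f \<bullet> y k))"
    by (simp add: frop_def inner_sum_right)
  also have "\<dots> = (\<Sum>k\<in>K. \<Sum>f\<in>F. (w k \<bullet> f) * (f \<bullet> y k))" by (rule sum.swap)
  also have "\<dots> = (\<Sum>k\<in>K. w k \<bullet> y k)"
    by (rule sum.cong[OF refl], rule onb_parseval[OF F(2,3,4)]) (use F(5) in auto)
  finally have 1: "(\<Sum>f\<in>F. f \<bullet> frop K w y f) = (\<Sum>k\<in>K. w k \<bullet> y k)" .
  have 0: "f \<bullet> frop K w y f = 0" if "f \<in> F - E" for f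
  proof -
    have "frop K w y f \<in> span E" using R by auto
    moreover have "orthogonal f e" if "e \<in> E" for e
      using F(1,3) \<open>f \<in> F - E\<close> that unfolding pairwise_def by (metis DiffD1 DiffD2 subsetD)
    ultimately show ?thesis using orthogonal_to_span by (auto simp: orthogonal_def)
  qed
  have "(\<Sum>f\<in>F. f \<bullet> frop K w y f) = (\<Sum>f\<in>E. f \<bullet> frop K w y f) + (\<Sum>f\<in>F - E. f \<bullet> frop K w y f)"
    using F(1,2) by (metis (no_types, lifting) add.commute sum.subset_diff)
  also have "(\<Sum>f\<in>F - E. f \<bullet> frop K w y f) = 0" using 0 by simp
  finally show ?thesis using 1 by simp
qed

lemma fr_trace_frop:
  fixes w y :: "'k \<Rightarrow> 'h::real_inner"
  assumes K: "finite K"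
  shows "fr_trace (frop K w y) = (\<Sum>k\<in>K. w k \<bullet> y k)"
proof -
  obtain E where E: "finite E" "pairwise orthogonal E" "\<forall>e\<in>E. norm e = 1" "y ` K \<subseteq> span E"
    using onb_extend[of "y ` K" "{}"] K by auto
  have R: "range (frop K w y) \<subseteq> span E"
    using E(4) unfolding frop_def by (auto intro!: span_sum span_mul)
  show ?thesis unfolding fr_trace_def
  proof (rule the_equality)
    show "\<forall>E. finite E \<and> pairwise orthogonal E \<and> (\<forall>e\<in>E. norm e = 1) \<and> range (frop K w y) \<subseteq> span E \<longrightarrow>
        (\<Sum>k\<in>K. w k \<bullet> y k) = (\<Sum>e\<in>E. e \<bullet> frop K w y e)"
      using frop_trace_any[OF K] by metis
  next
    fix t assume "\<forall>E. finite E \<and> pairwise orthogonal E \<and> (\<forall>e\<in>E. norm e = 1) \<and> range (frop K w y) \<subseteq> span E \<longrightarrow>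
        t = (\<Sum>e\<in>E. e \<bullet> frop K w y e)"
    then have "t = (\<Sum>e\<in>E. e \<bullet> frop K w y e)" using E R by blast
    then show "t = (\<Sum>k\<in>K. w k \<bullet> y k)" using frop_trace_any[OF K E(1-3) R] by simp
  qed
qed

lemma frop_comp:
  fixes w y u t :: "_ \<Rightarrow> 'h::real_inner"
  assumes "finite K" "finite L"
  shows "frop K w y \<circ> frop L u t = frop (K \<times> L) (\<lambda>(k,l). (w k \<bullet> t l) *\<^sub>R u l) (\<lambda>(k,l). y k)"
  using assms
  by (auto simp: frop_def fun_eq_iff inner_sum_right scaleR_sum_left sum.cartesian_product
      intro!: sum.cong)

lemma psd_sq:
  fixes v :: "'b \<Rightarrow> 'h::real_inner"
  assumes I: "finite I"
  shows "0 \<le> (\<Sum>i\<in>I. \<Sum>j\<in>I. c i * c j * (v i \<bullet> v j)\<^sup>2)"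
proof -
  obtain E where E: "finite E" "pairwise orthogonal E" "\<forall>e\<in>E. norm e = 1" "v ` I \<subseteq> span E"
    using onb_extend[of "v ` I" "{}"] I by auto
  have ip: "v i \<bullet> v j = (\<Sum>e\<in>E. (v i \<bullet> e) * (v j \<bullet> e))" if "j \<in> I" for i j
    using onb_parseval[OF E(1-3), of "v j" "v i"] E(4) that by (auto simp: inner_commute)
  have "(\<Sum>i\<in>I. \<Sum>j\<in>I. c i * c j * (v i \<bullet> v j)\<^sup>2)
      = (\<Sum>i\<in>I. \<Sum>j\<in>I. \<Sum>e\<in>E. \<Sum>e'\<in>E. (c i * (v i \<bullet> e) * (v i \<bullet> e')) * (c j * (v j \<bullet> e) * (v j \<bullet> e')))"
  proof (intro sum.cong refl)
    fix i j assume "i \<in> I" "j \<in> I"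
    have "(v i \<bullet> v j)\<^sup>2 = (\<Sum>e\<in>E. (v i \<bullet> e) * (v j \<bullet> e)) * (\<Sum>e'\<in>E. (v i \<bullet> e') * (v j \<bullet> e'))"
      using ip[OF \<open>j \<in> I\<close>] by (simp add: power2_eq_square)
    also have "\<dots> = (\<Sum>e\<in>E. \<Sum>e'\<in>E. ((v i \<bullet> e) * (v j \<bullet> e)) * ((v i \<bullet> e') * (v j \<bullet> e')))"
      by (simp add: sum_product)
    finally show "c i * c j * (v i \<bullet> v j)\<^sup>2 = (\<Sum>e\<in>E. \<Sum>e'\<in>E. (c i * (v i \<bullet> e) * (v i \<bullet> e')) * (c j * (v j \<bullet> e) * (v j \<bullet> e')))"
      by (simp add: sum_distrib_left mult_ac)
  qed
  also have "\<dots> = (\<Sum>e\<in>E. \<Sum>e'\<in>E. \<Sum>i\<in>I. \<Sum>j\<in>I. (c i * (v i \<bullet> e) * (v i \<bullet> e')) * (c j * (v j \<bullet> e) * (v j \<bullet> e')))"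
    by (subst sum.swap, subst (2) sum.swap, subst (3) sum.swap, subst (2) sum.swap, rule refl)
  also have "\<dots> = (\<Sum>e\<in>E. \<Sum>e'\<in>E. (\<Sum>i\<in>I. c i * (v i \<bullet> e) * (v i \<bullet> e'))\<^sup>2)"
    by (simp add: power2_eq_square sum_product)
  also have "\<dots> \<ge> 0" by (intro sum_nonneg) simp
  finally show ?thesis by simp
qed

lemma quad_cs:
  fixes Q S R :: real
  assumes "\<forall>t. 0 \<le> Q + 2 * t * S + t\<^sup>2 * R" "R \<ge> 0"
  shows "S\<^sup>2 \<le> Q * R"
proof (cases "R = 0")
  case True
  show ?thesis
  proof (cases "S = 0")
    case False
    have "0 \<le> Q + 2 * (- (Q + 1) / (2 * S)) * S + (- (Q + 1) / (2 * S))\<^sup>2 * R" using assms(1) by blast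
    then show ?thesis using True False by (simp add: field_simps)
  qed (use True in simp)
next
  case False
  then have R: "R > 0" using assms(2) by simp
  have "0 \<le> Q + 2 * (- S / R) * S + (- S / R)\<^sup>2 * R" using assms(1) by blast
  then have "0 \<le> Q - S\<^sup>2 / R" using R by (simp add: field_simps power2_eq_square)
  then show ?thesis using R by (simp add: field_simps)
qed

lemma expand_psd:
  fixes k :: "'a \<Rightarrow> 'a \<Rightarrow> real" and p :: "'b \<Rightarrow> 'a" and n :: nat and c :: "nat \<Rightarrow> real"
    and y :: "nat \<Rightarrow> 'a" and t :: real
  assumes psd: "\<And>(J :: ('b + nat) set) c u. finite J \<Longrightarrow> 0 \<le> (\<Sum>i\<in>J. \<Sum>j\<in>J. c i * c j * k (u i) (u j))"
    and sym: "\<And>p q. k p q = k q p" and I: "finite I"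
  shows "0 \<le> (\<Sum>i\<in>I. \<Sum>j\<in>I. \<alpha> i * \<alpha> j * k (p i) (p j))
             + 2 * t * (\<Sum>s<n. c s * (\<Sum>i\<in>I. \<alpha> i * k (p i) (y s)))
             + t\<^sup>2 * (\<Sum>s<n. \<Sum>r<n. c s * c r * k (y s) (y r))"
proof -
  define c' where "c' = case_sum \<alpha> (\<lambda>s. t * c s)"
  define u where "u = case_sum p y"
  have "0 \<le> (\<Sum>a\<in>I <+> {..<n}. \<Sum>b\<in>I <+> {..<n}. c' a * c' b * k (u a) (u b))"
    using psd[of "I <+> {..<n}" c' u] I by simp
  also have "\<dots> = (\<Sum>i\<in>I. \<Sum>j\<in>I. \<alpha> i * \<alpha> j * k (p i) (p j))
      + (\<Sum>i\<in>I. \<Sum>r<n. \<alpha> i * (t * c r) * k (p i) (y r))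
      + ((\<Sum>s<n. \<Sum>j\<in>I. (t * c s) * \<alpha> j * k (y s) (p j))
      + (\<Sum>s<n. \<Sum>r<n. (t * c s) * (t * c r) * k (y s) (y r)))"
    using I by (simp add: sum.Plus c'_def u_def sum.distrib)
  also have "(\<Sum>i\<in>I. \<Sum>r<n. \<alpha> i * (t * c r) * k (p i) (y r)) = t * (\<Sum>s<n. c s * (\<Sum>i\<in>I. \<alpha> i * k (p i) (y s)))"
    by (subst sum.swap) (simp add: sum_distrib_left mult_ac)
  also have "(\<Sum>s<n. \<Sum>j\<in>I. (t * c s) * \<alpha> j * k (y s) (p j)) = t * (\<Sum>s<n. c s * (\<Sum>i\<in>I. \<alpha> i * k (p i) (y s)))"
    by (simp add: sum_distrib_left mult_ac sym)
  also have "(\<Sum>s<n. \<Sum>r<n. (t * c s) * (t * c r) * k (y s) (y r)) = t\<^sup>2 * (\<Sum>s<n. \<Sum>r<n. c s * c r * k (y s) (y r))"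
    by (simp add: sum_distrib_left mult_ac power2_eq_square)
  finally show ?thesis by simp
qed

lemma rkhs_norm_fin:
  fixes k :: "'a \<Rightarrow> 'a \<Rightarrow> real" and p :: "'b \<Rightarrow> 'a"
  assumes psd: "\<And>(J :: ('b + nat) set) c u. finite J \<Longrightarrow> 0 \<le> (\<Sum>i\<in>J. \<Sum>j\<in>J. c i * c j * k (u i) (u j))"
    and psd2: "\<And>(J :: 'b set) c u. finite J \<Longrightarrow> 0 \<le> (\<Sum>i\<in>J. \<Sum>j\<in>J. c i * c j * k (u i) (u j))"
    and sym: "\<And>p q. k p q = k q p" and diag: "\<And>q. k q q > 0" and I: "finite I"
  shows "rkhs_norm_sq k (\<lambda>y. \<Sum>i\<in>I. \<alpha> i * k (p i) y) = (\<Sum>i\<in>I. \<Sum>j\<in>I. \<alpha> i * \<alpha> j * k (p i) (p j))"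
proof -
  define f where "f = (\<lambda>y. \<Sum>i\<in>I. \<alpha> i * k (p i) y)"
  define Q where "Q = (\<Sum>i\<in>I. \<Sum>j\<in>I. \<alpha> i * \<alpha> j * k (p i) (p j))"
  have Q0: "Q \<ge> 0" unfolding Q_def by (rule psd2[OF I])
  have fsum: "(\<Sum>s<n. c s * f (y s)) = (\<Sum>s<n. c s * (\<Sum>i\<in>I. \<alpha> i * k (p i) (y s)))" for n c y
    by (simp add: f_def)
  have bound: "rkhs_bound k f Q"
    unfolding rkhs_bound_def
  proof (intro allI)
    fix n :: nat and c :: "nat \<Rightarrow> real" and y :: "nat \<Rightarrow> 'a"
    have R0: "0 \<le> (\<Sum>s<n. \<Sum>r<n. c s * c r * k (y s) (y r))"
      using expand_psd[OF psd sym I, where \<alpha>="\<lambda>_. 0" and t=1 and n=n and c=c and y=y] by simp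
    show "(\<Sum>i<n. c i * f (y i))\<^sup>2 \<le> Q * (\<Sum>i<n. \<Sum>j<n. c i * c j * k (y i) (y j))"
      unfolding fsum Q_def
      by (rule quad_cs[OF _ R0]) (intro allI expand_psd[OF psd sym I])
  qed
  have lower: "Q \<le> C" if C: "rkhs_bound k f C" for C
  proof -
    obtain h where h: "bij_betw h {0..<card I} I" using ex_bij_betw_nat_finite[OF I] by blast
    have C1: "(f q)\<^sup>2 \<le> C * k q q" for q
      using C unfolding rkhs_bound_def by (drule_tac x=1 in spec, drule_tac x="\<lambda>_. 1" in spec,
        drule_tac x="\<lambda>_. q" in spec) simp
    have Cnn: "C \<ge> 0"
    proof -
      obtain q :: 'a where True by blast
      have "0 \<le> C * k q q" using C1[of q] by (meson order.trans zero_le_power2)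
      then show ?thesis using diag[of q] by (simp add: zero_le_mult_iff)
    qed
    have s1: "(\<Sum>t<card I. \<alpha> (h t) * f (p (h t))) = Q"
    proof -
      have "(\<Sum>t<card I. \<alpha> (h t) * f (p (h t))) = (\<Sum>i\<in>I. \<alpha> i * f (p i))"
        using sum.reindex_bij_betw[OF h, of "\<lambda>i. \<alpha> i * f (p i)"] by (simp add: atLeast0LessThan)
      also have "\<dots> = Q" by (simp add: Q_def f_def sum_distrib_left mult_ac sym)
      finally show ?thesis .
    qed
    have rb: "(\<Sum>x<card I. g (h x)) = sum g I" for g :: "'b \<Rightarrow> real"
      using sum.reindex_bij_betw[OF h] by (simp add: atLeast0LessThan)
    have s2: "(\<Sum>s<card I. \<Sum>r<card I. \<alpha> (h s) * \<alpha> (h r) * k (p (h s)) (p (h r))) = Q"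
    proof -
      have 1: "(\<Sum>r<card I. \<alpha> i * \<alpha> (h r) * k (p i) (p (h r))) = (\<Sum>j\<in>I. \<alpha> i * \<alpha> j * k (p i) (p j))" for i
        using rb[of "\<lambda>j. \<alpha> i * \<alpha> j * k (p i) (p j)"] by simp
      show ?thesis unfolding 1 Q_def using rb[of "\<lambda>i. \<Sum>j\<in>I. \<alpha> i * \<alpha> j * k (p i) (p j)"] by simp
    qed
    have "Q\<^sup>2 \<le> C * Q"
      using C unfolding rkhs_bound_def s1[symmetric]
      by (drule_tac x="card I" in spec, drule_tac x="\<lambda>t. \<alpha> (h t)" in spec,
        drule_tac x="\<lambda>t. p (h t)" in spec) (simp only: s1 s2)
    then show ?thesis using Q0 Cnn
      by (cases "Q = 0") (auto simp: power2_eq_square mult_le_cancel_right)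
  qed
  have "Inf {C. rkhs_bound k f C} = Q"
    by (rule cInf_eq_minimum) (use bound lower in auto)
  then show ?thesis by (simp add: rkhs_norm_sq_def f_def Q_def)
qed

lemma gk_alt: "gauss_kernel s p q = exp (- ((p - q) \<bullet> (p - q)) / (2 * s\<^sup>2))"
  for p q :: "'a::real_inner"
  by (simp add: gauss_kernel_def power2_norm_eq_inner)

lemma gk_sym: "gauss_kernel s p q = gauss_kernel s q p"
  by (simp add: gauss_kernel_def norm_minus_commute)

lemma gk_diag: "gauss_kernel s q q > 0"
  by (simp add: gauss_kernel_def)

lemma exp_sq: "(exp t)\<^sup>2 = exp (2 * t)" for t :: real
  by (rule exp_double[symmetric])

lemma gk_E4:
  fixes p q :: "'a::real_inner"
  assumes "s > 0" "\<sigma> > 0"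
  shows "gauss_kernel s p q = (gauss_kernel (sqrt 2 * \<sigma>) ((\<sigma> / s) *\<^sub>R p) ((\<sigma> / s) *\<^sub>R q))\<^sup>2"
proof -
  have d: "(\<sigma> / s) *\<^sub>R p - (\<sigma> / s) *\<^sub>R q = (\<sigma> / s) *\<^sub>R (p - q)" by (rule scaleR_diff_right[symmetric])
  define N where "N = (p - q) \<bullet> (p - q)"
  have e: "2 * (- ((\<sigma> / s) * ((\<sigma> / s) * N)) / (2 * (sqrt 2 * \<sigma>)\<^sup>2)) = - N / (2 * s\<^sup>2)"
    using assms by (simp add: power_mult_distrib power_divide field_simps power2_eq_square)
  have A: "gauss_kernel (sqrt 2 * \<sigma>) ((\<sigma> / s) *\<^sub>R p) ((\<sigma> / s) *\<^sub>R q)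
      = exp (- ((\<sigma> / s) * ((\<sigma> / s) * N)) / (2 * (sqrt 2 * \<sigma>)\<^sup>2))"
    unfolding gk_alt d inner_scaleR_left inner_scaleR_right N_def ..
  have "gauss_kernel s p q = exp (- N / (2 * s\<^sup>2))" by (simp add: gk_alt N_def)
  also have "\<dots> = exp (2 * (- ((\<sigma> / s) * ((\<sigma> / s) * N)) / (2 * (sqrt 2 * \<sigma>)\<^sup>2)))"
    by (rule arg_cong[where f=exp, OF e[symmetric]])
  also have "\<dots> = (exp (- ((\<sigma> / s) * ((\<sigma> / s) * N)) / (2 * (sqrt 2 * \<sigma>)\<^sup>2)))\<^sup>2"
    by (rule exp_sq[symmetric])
  also have "\<dots> = (gauss_kernel (sqrt 2 * \<sigma>) ((\<sigma> / s) *\<^sub>R p) ((\<sigma> / s) *\<^sub>R q))\<^sup>2"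
    by (simp only: A)
  finally show ?thesis .
qed

lemma gk_E1:
  fixes p q :: "'a::real_inner"
  assumes "\<sigma> > 0"
  shows "gauss_kernel \<sigma> p q = (gauss_kernel (sqrt 2 * \<sigma>) p q)\<^sup>2"
  using gk_E4[OF assms assms, of p q] assms by simp

lemma gk_E2:
  fixes p q y :: "'a::real_inner"
  assumes "\<sigma> > 0"
  shows "gauss_kernel \<sigma> p y * gauss_kernel \<sigma> q y
     = gauss_kernel (sqrt 2 * \<sigma>) p q * gauss_kernel (\<sigma> / sqrt 2) ((1/2) *\<^sub>R (p + q)) y"
  using assms
  by (simp add: gk_alt exp_add[symmetric] power_mult_distrib power_divide field_simps
      inner_diff_left inner_diff_right inner_add_left inner_add_right inner_commute)

lemma gk_E3:
  fixes i j k l :: "'a::real_inner"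
  assumes "\<sigma> > 0"
  shows "gauss_kernel (sqrt 2 * \<sigma>) i j * gauss_kernel (sqrt 2 * \<sigma>) k l
      * gauss_kernel (\<sigma> / sqrt 2) ((1/2) *\<^sub>R (i + j)) ((1/2) *\<^sub>R (k + l))
    = gauss_kernel (sqrt 2 * \<sigma>) i k * gauss_kernel (sqrt 2 * \<sigma>) k j
      * gauss_kernel (sqrt 2 * \<sigma>) j l * gauss_kernel (sqrt 2 * \<sigma>) l i"
  using assms
  by (simp add: gk_alt exp_add[symmetric] power_mult_distrib power_divide field_simps
      inner_diff_left inner_diff_right inner_add_left inner_add_right inner_commute)

lemma psd_gauss:
  fixes \<phi> :: "'a::real_inner \<Rightarrow> 'h::real_inner" and u :: "'b \<Rightarrow> 'a"
  assumes "\<sigma> > 0" "s > 0" "\<forall>p q. \<phi> p \<bullet> \<phi> q = gauss_kernel (sqrt 2 * \<sigma>) p q" "finite J"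
  shows "0 \<le> (\<Sum>i\<in>J. \<Sum>j\<in>J. c i * c j * gauss_kernel s (u i) (u j))"
proof -
  have "gauss_kernel s (u i) (u j) = (\<phi> ((\<sigma> / s) *\<^sub>R u i) \<bullet> \<phi> ((\<sigma> / s) *\<^sub>R u j))\<^sup>2" for i j
    using gk_E4[OF assms(2,1)] assms(3) by simp
  then show ?thesis using psd_sq[OF assms(4), of c "\<lambda>i. \<phi> ((\<sigma> / s) *\<^sub>R u i)"] by simp
qed

lemma A_frop:
  fixes z :: "nat \<Rightarrow> 'h::real_inner"
  shows "(\<lambda>v. \<Sum>i<m. a i *\<^sub>R rank_one (z i) v) = frop {..<m} (\<lambda>i. a i *\<^sub>R z i) z"
  by (simp add: frop_def rank_one_def)

theorem proposition1:
  fixes \<sigma> :: real and m :: nat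
    and x :: "nat \<Rightarrow> real ^ 'd"
    and a b :: "nat \<Rightarrow> real"
    and \<phi> :: "real ^ 'd \<Rightarrow> 'h::real_inner"
    and f g :: "real ^ 'd \<Rightarrow> real"
    and z :: "nat \<Rightarrow> 'h"
    and A B :: "'h \<Rightarrow> 'h"
  assumes "\<sigma> > 0"
    and feat: "\<forall>p q. \<phi> p \<bullet> \<phi> q = gauss_kernel (sqrt 2 * \<sigma>) p q"
    and f_def: "f = (\<lambda>y. \<Sum>i<m. a i * gauss_kernel \<sigma> (x i) y)"
    and g_def: "g = (\<lambda>y. \<Sum>j<m. b j * gauss_kernel \<sigma> (x j) y)"
    and z_def: "z = (\<lambda>i. \<phi> (x i))"
    and A_def: "A = (\<lambda>v. \<Sum>i<m. a i *\<^sub>R rank_one (z i) v)"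
    and B_def: "B = (\<lambda>v. \<Sum>j<m. b j *\<^sub>R rank_one (z j) v)"
  shows "rkhs_norm_sq (gauss_kernel (\<sigma> / sqrt 2)) (\<lambda>y. f y * g y) = fr_trace (A \<circ> A \<circ> B \<circ> B)
       \<and> rkhs_norm_sq (gauss_kernel \<sigma>) f = fr_trace (A \<circ> A)
       \<and> rkhs_norm_sq (gauss_kernel \<sigma>) g = fr_trace (B \<circ> B)"
proof -
  note s0 = \<open>\<sigma> > 0\<close>
  have s1: "\<sigma> / sqrt 2 > 0" using s0 by simp
  define K :: "real ^ 'd \<Rightarrow> real ^ 'd \<Rightarrow> real" where "K = gauss_kernel (sqrt 2 * \<sigma>)"
  have zz: "z i \<bullet> z j = K (x i) (x j)" for i j by (simp add: z_def feat K_def)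
  have Ksym: "K p q = K q p" for p q unfolding K_def by (rule gk_sym)
  have E1K: "gauss_kernel \<sigma> p q = (K p q)\<^sup>2" for p q unfolding K_def by (rule gk_E1[OF s0])
  have A': "A = frop {..<m} (\<lambda>i. a i *\<^sub>R z i) z" unfolding A_def by (rule A_frop)
  have B': "B = frop {..<m} (\<lambda>i. b i *\<^sub>R z i) z" unfolding B_def by (rule A_frop)
  have norm1: "rkhs_norm_sq (gauss_kernel \<sigma>) (\<lambda>y. \<Sum>i<m. c i * gauss_kernel \<sigma> (x i) y)
       = fr_trace (frop {..<m} (\<lambda>i. c i *\<^sub>R z i) z \<circ> frop {..<m} (\<lambda>i. c i *\<^sub>R z i) z)" for c
  proof -
    have "rkhs_norm_sq (gauss_kernel \<sigma>) (\<lambda>y. \<Sum>i<m. c i * gauss_kernel \<sigma> (x i) y)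
        = (\<Sum>i<m. \<Sum>j<m. c i * c j * gauss_kernel \<sigma> (x i) (x j))"
      by (rule rkhs_norm_fin) (auto intro: psd_gauss[OF s0 s0 feat] gk_sym gk_diag)
    also have "\<dots> = fr_trace (frop {..<m} (\<lambda>i. c i *\<^sub>R z i) z \<circ> frop {..<m} (\<lambda>i. c i *\<^sub>R z i) z)"
      by (simp add: frop_comp fr_trace_frop sum.cartesian_product' zz E1K power2_eq_square
          mult_ac Ksym)
    finally show ?thesis .
  qed
  define k' :: "real ^ 'd \<Rightarrow> real ^ 'd \<Rightarrow> real" where "k' = gauss_kernel (\<sigma> / sqrt 2)"
  define \<alpha>2 where "\<alpha>2 = (\<lambda>(i,j). a i * b j * K (x i) (x j))"
  define p2 where "p2 = (\<lambda>(i::nat,j::nat). (1/2::real) *\<^sub>R (x i + x j))"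
  define F where "F = (\<lambda>i j k l. a i * a k * b j * b l * (K (x i) (x k) * K (x k) (x j) * K (x j) (x l) * K (x l) (x i)))"
  have E2K: "gauss_kernel \<sigma> p y * gauss_kernel \<sigma> q y = K p q * k' ((1/2) *\<^sub>R (p + q)) y" for p q y
    unfolding K_def k'_def by (rule gk_E2[OF s0])
  have E3K: "K i j * K k l * k' ((1/2) *\<^sub>R (i + j)) ((1/2) *\<^sub>R (k + l)) = K i k * K k j * K j l * K l i" for i j k l
    unfolding K_def k'_def by (rule gk_E3[OF s0])
  have fg: "(\<lambda>y. f y * g y) = (\<lambda>y. \<Sum>P\<in>{..<m} \<times> {..<m}. \<alpha>2 P * k' (p2 P) y)"
  proof
    fix y
    have "f y * g y = (\<Sum>i<m. \<Sum>j<m. (a i * b j) * (gauss_kernel \<sigma> (x i) y * gauss_kernel \<sigma> (x j) y))"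
      by (simp add: f_def g_def sum_product mult_ac)
    also have "\<dots> = (\<Sum>i<m. \<Sum>j<m. \<alpha>2 (i, j) * k' (p2 (i, j)) y)"
      by (simp add: E2K \<alpha>2_def p2_def mult_ac)
    also have "\<dots> = (\<Sum>P\<in>{..<m} \<times> {..<m}. \<alpha>2 P * k' (p2 P) y)"
      by (simp add: sum.cartesian_product')
    finally show "f y * g y = (\<Sum>P\<in>{..<m} \<times> {..<m}. \<alpha>2 P * k' (p2 P) y)" .
  qed
  have n2: "rkhs_norm_sq k' (\<lambda>y. \<Sum>P\<in>{..<m} \<times> {..<m}. \<alpha>2 P * k' (p2 P) y)
      = (\<Sum>P\<in>{..<m} \<times> {..<m}. \<Sum>Q\<in>{..<m} \<times> {..<m}. \<alpha>2 P * \<alpha>2 Q * k' (p2 P) (p2 Q))"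
    unfolding k'_def
    by (rule rkhs_norm_fin) (auto intro: psd_gauss[OF s0 s1 feat] gk_sym gk_diag)
  also have "\<dots> = (\<Sum>i<m. \<Sum>j<m. \<Sum>k<m. \<Sum>l<m. F i j k l)"
  proof -
    have t: "\<alpha>2 (i, j) * \<alpha>2 (k, l) * k' (p2 (i, j)) (p2 (k, l)) = F i j k l" for i j k l
    proof -
      have "\<alpha>2 (i, j) * \<alpha>2 (k, l) * k' (p2 (i, j)) (p2 (k, l))
          = (a i * a k * b j * b l) * (K (x i) (x j) * K (x k) (x l) * k' ((1/2) *\<^sub>R (x i + x j)) ((1/2) *\<^sub>R (x k + x l)))"
        by (simp add: \<alpha>2_def p2_def mult_ac)
      also have "\<dots> = F i j k l" by (simp only: E3K F_def)
      finally show ?thesis .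
    qed
    show ?thesis by (simp add: sum.cartesian_product' t)
  qed
  also have "\<dots> = (\<Sum>i<m. \<Sum>k<m. \<Sum>j<m. \<Sum>l<m. F i j k l)"
    by (rule sum.cong[OF refl], rule sum.swap)
  finally have nfg: "rkhs_norm_sq k' (\<lambda>y. f y * g y) = (\<Sum>i<m. \<Sum>k<m. \<Sum>j<m. \<Sum>l<m. F i j k l)"
    unfolding fg .
  have tr: "fr_trace (A \<circ> A \<circ> B \<circ> B) = (\<Sum>i<m. \<Sum>k<m. \<Sum>l<m. \<Sum>j<m. F i l k j)"
    unfolding A' B'
    by (simp add: frop_comp fr_trace_frop sum.cartesian_product' zz F_def mult_ac Ksym)
  show ?thesis
    using nfg tr norm1[of a] norm1[of b] A' B' f_def g_def k'_def by simp
qed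

end
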